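(* Let the cell types be indexed $\{0,1,\dots,n\}$ with $0$ the non-resistant type, and let $\boldsymbol{\alpha}_{(0)}=(\alpha_{(0,0)},\alpha_{(0,1)},\dots,\alpha_{(0,n)})$ be a probability vector. Define a random process $\boldsymbol{\pi}(t)\in\mathbb{Z}_+^{n+1}$, $t\in\mathbb{Z}_+$, by $\boldsymbol{\pi}(0)=\mathbf{e}_0$ (a single non-resistant cell) and $$\boldsymbol{\pi}(t+1)\sim \mathrm{MD}\big(\pi_0(t),\boldsymbol{\alpha}_{(0)}\big)+2\boldsymbol{\pi}(t)-\mathbf{e}_0\circ\boldsymbol{\pi}(t),$$ where $\mathrm{MD}(m,\mathbf{p})$ denotes a multinomial random vector with $m$ trials and outcome probabilities $\mathbf{p}$ (drawn conditionally on $\boldsymbol{\pi}(t)$), $\mathbf{e}_0$ is the first unit vector and $\circ$ is the componentwise product. Then for every $t\in\mathbb{Z}_+$, $\mathbb{E}(\pi_0(t))=(\alpha_{(0,0)}+1)^t$, and for every resistant type $q\ne0$, $\mathbb{E}(\pi_q(t+1))=\sum_{k=0}^{t}2^k\alpha_{(0,q)}(\alpha_{(0,0)}+1)^{t-k}$.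
   Context: This is a branching model of tumor growth: $\pi_q(t)$ is the number of cells of type $q$ at generation $t$; non-resistant cells may give rise to a mutated (single-drug resistant) daughter cell of type $q$ with probability $\alpha_{(0,q)}$, while resistant cells simply double each generation. *)

theory Defs
  imports "HOL-Probability.Probability"
begin

text \<open>States are vectors in Z_+^{n+1}, represented as functions nat => nat (components
  beyond n stay 0). The probability vector alpha_(0) is a pmf on cell types {0..n}.\<close>

primrec multinomial_pmf :: "nat pmf \<Rightarrow> nat \<Rightarrow> (nat \<Rightarrow> nat) pmf" where
  "multinomial_pmf \<alpha> 0 = return_pmf (\<lambda>_. 0)"
| "multinomial_pmf \<alpha> (Suc m) =
     bind_pmf (multinomial_pmf \<alpha> m) (\<lambda>v. map_pmf (\<lambda>i. v(i := v i + 1)) \<alpha>)"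

definition unit0 :: "nat \<Rightarrow> nat" where
  "unit0 = (\<lambda>i. if i = 0 then 1 else 0)"

primrec tumor_process :: "nat pmf \<Rightarrow> nat \<Rightarrow> (nat \<Rightarrow> nat) pmf" where
  "tumor_process \<alpha> 0 = return_pmf unit0"
| "tumor_process \<alpha> (Suc t) =
     bind_pmf (tumor_process \<alpha> t)
       (\<lambda>\<pi>. map_pmf (\<lambda>x i. x i + 2 * \<pi> i - unit0 i * \<pi> i) (multinomial_pmf \<alpha> (\<pi> 0)))"

end

theory Submission
  imports Defs
begin

lemma exp_bind_fin:
  fixes p :: "'a pmf" and f :: "'a \<Rightarrow> 'b pmf" and h :: "'b \<Rightarrow> real"
  assumes "finite (set_pmf p)" "\<And>x. x \<in> set_pmf p \<Longrightarrow> finite (set_pmf (f x))"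
  shows "measure_pmf.expectation (p \<bind> f) h = measure_pmf.expectation p (\<lambda>x. measure_pmf.expectation (f x) h)"
  using assms
  by (subst pmf_expectation_bind[of "set_pmf p"], simp_all, subst integral_measure_pmf[of "set_pmf p"], auto)

lemma fin_multi:
  assumes "finite (set_pmf \<alpha>)"
  shows "finite (set_pmf (multinomial_pmf \<alpha> m))"
  by (induction m) (auto simp: assms)

lemma exp_indic: "measure_pmf.expectation \<alpha> (\<lambda>i. if i = j then 1 else (0::real)) = pmf \<alpha> j"
proof -
  have "(\<lambda>i. if i = j then 1 else (0::real)) = indicator {j}" by (auto simp: indicator_def)
  then show ?thesis by (simp add: measure_pmf_single)
qed

lemma exp_multi:
  assumes "finite (set_pmf \<alpha>)"
  shows "measure_pmf.expectation (multinomial_pmf \<alpha> m) (\<lambda>v. real (v j)) = real m * pmf \<alpha> j"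
proof (induction m)
  case 0
  then show ?case by simp
next
  case (Suc m)
  have inner: "measure_pmf.expectation (map_pmf (\<lambda>i. v(i := v i + 1)) \<alpha>) (\<lambda>w. real (w j))
      = real (v j) + pmf \<alpha> j" for v :: "nat \<Rightarrow> nat"
  proof -
    have "measure_pmf.expectation (map_pmf (\<lambda>i. v(i := v i + 1)) \<alpha>) (\<lambda>w. real (w j))
       = measure_pmf.expectation \<alpha> (\<lambda>i. real (v j) + (if i = j then 1 else 0))"
      by (subst integral_map_pmf, intro Bochner_Integration.integral_cong) auto
    also have "\<dots> = real (v j) + pmf \<alpha> j"
      using exp_indic[of \<alpha> j]
      by (subst Bochner_Integration.integral_add) (auto intro: integrable_measure_pmf_finite assms)
    finally show ?thesis .
  qed
  have "measure_pmf.expectation (multinomial_pmf \<alpha> (Suc m)) (\<lambda>v. real (v j))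
     = measure_pmf.expectation (multinomial_pmf \<alpha> m) (\<lambda>v. real (v j) + pmf \<alpha> j)"
    by (simp only: multinomial_pmf.simps, subst exp_bind_fin)
       (simp_all only: inner fin_multi assms, auto simp: assms fin_multi)
  also have "\<dots> = real m * pmf \<alpha> j + pmf \<alpha> j"
    using Suc
    by (subst Bochner_Integration.integral_add) (auto intro: integrable_measure_pmf_finite fin_multi assms)
  finally show ?case by (simp add: algebra_simps)
qed

lemma fin_tumor:
  assumes "finite (set_pmf \<alpha>)"
  shows "finite (set_pmf (tumor_process \<alpha> t))"
  by (induction t) (auto simp: assms fin_multi)

lemma exp_step:
  assumes "finite (set_pmf \<alpha>)"
  shows "measure_pmf.expectation (tumor_process \<alpha> (Suc t)) (\<lambda>\<pi>. real (\<pi> j))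
    = measure_pmf.expectation (tumor_process \<alpha> t)
        (\<lambda>\<pi>. real (\<pi> 0) * pmf \<alpha> j + (if j = 0 then real (\<pi> j) else 2 * real (\<pi> j)))"
proof -
  have inner: "measure_pmf.expectation (map_pmf (\<lambda>x i. x i + 2 * \<pi> i - unit0 i * \<pi> i) (multinomial_pmf \<alpha> (\<pi> 0)))
       (\<lambda>w. real (w j)) = real (\<pi> 0) * pmf \<alpha> j + (if j = 0 then real (\<pi> j) else 2 * real (\<pi> j))"
    for \<pi> :: "nat \<Rightarrow> nat"
  proof -
    have "measure_pmf.expectation (map_pmf (\<lambda>x i. x i + 2 * \<pi> i - unit0 i * \<pi> i) (multinomial_pmf \<alpha> (\<pi> 0)))
       (\<lambda>w. real (w j)) = measure_pmf.expectation (multinomial_pmf \<alpha> (\<pi> 0))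
          (\<lambda>x. real (x j) + (if j = 0 then real (\<pi> j) else 2 * real (\<pi> j)))"
      by (subst integral_map_pmf, intro Bochner_Integration.integral_cong) (auto simp: unit0_def)
    also have "\<dots> = real (\<pi> 0) * pmf \<alpha> j + (if j = 0 then real (\<pi> j) else 2 * real (\<pi> j))"
      using exp_multi[OF assms, of "\<pi> 0" j]
      by (subst Bochner_Integration.integral_add) (auto intro: integrable_measure_pmf_finite fin_multi assms)
    finally show ?thesis .
  qed
  show ?thesis
    by (simp only: tumor_process.simps, subst exp_bind_fin)
       (auto simp del: integral_map_pmf simp add: fin_multi fin_tumor assms inner)
qed

theorem proposition1:
  fixes \<alpha> :: "nat pmf" and n :: nat
  assumes "set_pmf \<alpha> \<subseteq> {0..n}"
  shows "\<forall>t::nat.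
     measure_pmf.expectation (tumor_process \<alpha> t) (\<lambda>\<pi>. real (\<pi> 0)) = (pmf \<alpha> 0 + 1) ^ t
     \<and> (\<forall>q. 1 \<le> q \<and> q \<le> n \<longrightarrow>
          measure_pmf.expectation (tumor_process \<alpha> (Suc t)) (\<lambda>\<pi>. real (\<pi> q))
          = (\<Sum>k = 0..t. 2 ^ k * pmf \<alpha> q * (pmf \<alpha> 0 + 1) ^ (t - k)))"
proof -
  have fin: "finite (set_pmf \<alpha>)" using assms finite_subset by blast
  have int: "integrable (measure_pmf (tumor_process \<alpha> t)) f" for t and f :: "(nat \<Rightarrow> nat) \<Rightarrow> real"
    by (intro integrable_measure_pmf_finite fin_tumor fin)
  have E0: "measure_pmf.expectation (tumor_process \<alpha> t) (\<lambda>\<pi>. real (\<pi> 0)) = (pmf \<alpha> 0 + 1) ^ t" for t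
  proof (induction t)
    case 0 then show ?case by (simp add: unit0_def)
  next
    case (Suc t)
    have "measure_pmf.expectation (tumor_process \<alpha> (Suc t)) (\<lambda>\<pi>. real (\<pi> 0))
      = measure_pmf.expectation (tumor_process \<alpha> t) (\<lambda>\<pi>. real (\<pi> 0) * (pmf \<alpha> 0 + 1))"
      by (subst exp_step[OF fin]) (simp add: algebra_simps)
    also have "\<dots> = (pmf \<alpha> 0 + 1) ^ Suc t" using Suc by simp
    finally show ?case .
  qed
  have Eq: "measure_pmf.expectation (tumor_process \<alpha> (Suc t)) (\<lambda>\<pi>. real (\<pi> q))
          = (\<Sum>k = 0..t. 2 ^ k * pmf \<alpha> q * (pmf \<alpha> 0 + 1) ^ (t - k))" if q: "q \<ge> 1" for q t
  proof (induction t)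
    case 0
    show ?case using q
      by (subst exp_step[OF fin]) (simp add: unit0_def)
  next
    case (Suc t)
    have "measure_pmf.expectation (tumor_process \<alpha> (Suc (Suc t))) (\<lambda>\<pi>. real (\<pi> q))
      = measure_pmf.expectation (tumor_process \<alpha> (Suc t)) (\<lambda>\<pi>. real (\<pi> 0) * pmf \<alpha> q + 2 * real (\<pi> q))"
      using q by (subst exp_step[OF fin]) simp
    also have "\<dots> = (pmf \<alpha> 0 + 1) ^ Suc t * pmf \<alpha> q
        + 2 * (\<Sum>k = 0..t. 2 ^ k * pmf \<alpha> q * (pmf \<alpha> 0 + 1) ^ (t - k))"
      using Suc E0[of "Suc t"] int[of "Suc t"] by (subst Bochner_Integration.integral_add) (simp_all del: tumor_process.simps)
    also have "\<dots> = (\<Sum>k = 0..Suc t. 2 ^ k * pmf \<alpha> q * (pmf \<alpha> 0 + 1) ^ (Suc t - k))"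
    proof -
      have "(\<Sum>k = 0..Suc t. 2 ^ k * pmf \<alpha> q * (pmf \<alpha> 0 + 1) ^ (Suc t - k))
         = (pmf \<alpha> 0 + 1) ^ Suc t * pmf \<alpha> q + (\<Sum>k = 0..t. 2 ^ Suc k * pmf \<alpha> q * (pmf \<alpha> 0 + 1) ^ (Suc t - Suc k))"
        by (subst sum.atLeast0_atMost_Suc_shift) simp
      also have "\<dots> = (pmf \<alpha> 0 + 1) ^ Suc t * pmf \<alpha> q
        + 2 * (\<Sum>k = 0..t. 2 ^ k * pmf \<alpha> q * (pmf \<alpha> 0 + 1) ^ (t - k))"
        by (simp add: sum_distrib_left algebra_simps)
      finally show ?thesis by simp
    qed
    finally show ?case .
  qed
  show ?thesis using E0 Eq by auto
qed

end
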